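(* Let $\nu_0$ be a probability distribution on $[0,1]$ (not necessarily finitely supported) with mean $\mathbb{E}(\nu_0)\in(0,1)$, let $n\ge1$ and let $X_1,\dots,X_n$ be independent random variables with common distribution $\nu_0$, with empirical distribution $\hat\nu_n=\frac1n\sum_{k=1}^n\delta_{X_k}$. For $\epsilon>0$ define \[ U(\hat\nu_n,\epsilon)=\sup\{\mathbb{E}(\nu'):\nu'\in\mathfrak{M}_1(\mathrm{Supp}(\hat\nu_n)\cup\{1\}),\ \mathrm{KL}(\hat\nu_n,\nu')\le\epsilon\}. \] Then for all $\epsilon>0$, \[ \mathbb{P}\{U(\hat\nu_n,\epsilon)\le\mathbb{E}(\nu_0)\}\le\mathbb{P}\{\mathcal{K}_{\inf}(\hat\nu_n,\mathbb{E}(\nu_0))\ge\epsilon\}\le e(n+2)\exp(-n\epsilon). \]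
   Context: $\mathfrak{M}_1(S)$ denotes the set of probability distributions on a set $S$, $\mathrm{Supp}$ the (finite) support, $\mathbb{E}(\nu)$ the mean of $\nu$, and $\mathrm{KL}$ the Kullback–Leibler divergence. $\mathcal{F}$ is the set of finitely supported probability distributions on $[0,1]$, and for $\nu\in\mathcal{F}$, $\mu\in\mathbb{R}$, $\mathcal{K}_{\inf}(\nu,\mu)=\inf\{\mathrm{KL}(\nu,\nu'):\nu'\in\mathcal{F},\ \mathbb{E}(\nu')>\mu\}$. *)

theory Defs
  imports "HOL-Probability.Probability"
begin

text \<open>Finitely supported probability distributions are represented as elements of
  type real pmf with finite support.\<close>

definition pmf_mean :: "real pmf \<Rightarrow> real" where
  "pmf_mean p = measure_pmf.expectation p (\<lambda>x. x)"

definition KL :: "real pmf \<Rightarrow> real pmf \<Rightarrow> ereal" where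
  "KL p q = (if set_pmf p \<subseteq> set_pmf q
             then ereal (\<Sum>x\<in>set_pmf p. pmf p x * ln (pmf p x / pmf q x))
             else \<infinity>)"

definition F_class :: "real pmf set" where
  "F_class = {p. finite (set_pmf p) \<and> set_pmf p \<subseteq> {0..1}}"

definition Kinf :: "real pmf \<Rightarrow> real \<Rightarrow> ereal" where
  "Kinf \<nu> \<mu> = Inf {KL \<nu> \<nu>' | \<nu>'. \<nu>' \<in> F_class \<and> pmf_mean \<nu>' > \<mu>}"

definition Ucb :: "real pmf \<Rightarrow> real \<Rightarrow> real" where
  "Ucb \<nu> \<epsilon> = Sup {pmf_mean \<nu>' | \<nu>'. set_pmf \<nu>' \<subseteq> set_pmf \<nu> \<union> {1} \<and> KL \<nu> \<nu>' \<le> ereal \<epsilon>}"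

definition empirical :: "nat \<Rightarrow> (nat \<Rightarrow> real) \<Rightarrow> real pmf" where
  "empirical n x = pmf_of_multiset (mset (map x [0..<n]))"

end

theory Submission
  imports Defs
begin

lemma count_map_upt: "count (mset (map x [0..<n])) y = card {k. k < n \<and> x k = y}"
proof (induction n)
  case 0 then show ?case by simp
next
  case (Suc n)
  have "{k. k < Suc n \<and> x k = y} = {k. k < n \<and> x k = y} \<union> (if x n = y then {n} else {})"
    by (auto simp: less_Suc_eq)
  moreover have "n \<notin> {k. k < n \<and> x k = y}" by auto
  ultimately have "card {k. k < Suc n \<and> x k = y} = card {k. k < n \<and> x k = y} + (if x n = y then 1 else 0)"
    by (auto simp del: Collect_conj_eq)
  then show ?case using Suc by simp
qed

lemma emp_ne: "n \<ge> 1 \<Longrightarrow> mset (map x [0..<n]) \<noteq> {#}" by (cases n) auto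

lemma emp_set: assumes "n \<ge> 1" shows "set_pmf (empirical n x) = x ` {..<n}"
proof -
  have "set_pmf (empirical n x) = set_mset (mset (map x [0..<n]))"
    unfolding empirical_def by (rule set_pmf_of_multiset[OF emp_ne[OF assms]])
  also have "\<dots> = x ` {..<n}" by (simp only: set_mset_mset set_map) (auto)
  finally show ?thesis .
qed

lemma emp_pmf: assumes "n \<ge> 1"
  shows "pmf (empirical n x) y = real (card {k. k < n \<and> x k = y}) / real n"
proof -
  have "pmf (empirical n x) y = real (count (mset (map x [0..<n])) y) / real (size (mset (map x [0..<n])))"
    unfolding empirical_def by (rule pmf_of_multiset[OF emp_ne[OF assms]])
  also have "size (mset (map x [0..<n])) = n" by (simp only: size_mset length_map length_upt diff_zero)
  finally show ?thesis by (simp only: count_map_upt)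
qed


definition mc :: "nat \<Rightarrow> (nat \<Rightarrow> real) \<Rightarrow> real \<Rightarrow> nat" where
  "mc n x y = card {j. j < n \<and> x j = y}"

lemma mc_pos: "k < n \<Longrightarrow> mc n x (x k) > 0"
  unfolding mc_def by (subst card_gt_0_iff) auto

lemma group_sum:
  "(\<Sum>k<n. g (x k) / real (mc n x (x k))) = (\<Sum>y\<in>x`{..<n}. g y)"
proof -
  have "(\<Sum>k<n. g (x k) / real (mc n x (x k)))
      = (\<Sum>y\<in>x`{..<n}. \<Sum>k\<in>{k. k \<in> {..<n} \<and> x k = y}. g (x k) / real (mc n x (x k)))"
    by (rule sum.image_gen) simp
  also have "\<dots> = (\<Sum>y\<in>x`{..<n}. g y)"
  proof (rule sum.cong[OF refl])
    fix y assume y: "y \<in> x`{..<n}"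
    have "(\<Sum>k\<in>{k. k \<in> {..<n} \<and> x k = y}. g (x k) / real (mc n x (x k)))
        = (\<Sum>k\<in>{k. k \<in> {..<n} \<and> x k = y}. g y / real (mc n x y))" by (rule sum.cong) auto
    also have "\<dots> = real (mc n x y) * (g y / real (mc n x y))" by (simp add: mc_def)
    also have "\<dots> = g y"
    proof -
      obtain k where "k < n" "y = x k" using y by auto
      then have "mc n x y > 0" using mc_pos[of k n x] by simp
      then show ?thesis by simp
    qed
    finally show "(\<Sum>k\<in>{k. k \<in> {..<n} \<and> x k = y}. g (x k) / real (mc n x (x k))) = g y" .
  qed
  finally show ?thesis .
qed

lemma emp_sum: assumes "n \<ge> 1"
  shows "(\<Sum>y\<in>set_pmf (empirical n x). pmf (empirical n x) y * f y) = (\<Sum>k<n. f (x k)) / real n"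
proof -
  have "(\<Sum>y\<in>set_pmf (empirical n x). pmf (empirical n x) y * f y)
      = (\<Sum>y\<in>x`{..<n}. real (mc n x y) / real n * f y)"
    using assms by (simp add: emp_set emp_pmf mc_def)
  also have "\<dots> = (\<Sum>k<n. real (mc n x (x k)) / real n * f (x k) / real (mc n x (x k)))"
    by (rule group_sum[symmetric])
  also have "\<dots> = (\<Sum>k<n. f (x k) / real n)"
    by (rule sum.cong[OF refl]) (use mc_pos[of _ n x] in fastforce)
  finally show ?thesis by (simp add: sum_divide_distrib)
qed

definition nuq :: "nat \<Rightarrow> (nat \<Rightarrow> real) \<Rightarrow> real \<Rightarrow> (nat \<Rightarrow> real) \<Rightarrow> real pmf" where
  "nuq n q q0 x = pmf_of_list ((1, q0) # map (\<lambda>k. (x k, q k)) [0..<n])"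

definition goodq :: "nat \<Rightarrow> (nat \<Rightarrow> real) \<Rightarrow> real \<Rightarrow> bool" where
  "goodq n q q0 \<longleftrightarrow> (\<forall>k<n. 0 < q k) \<and> 0 \<le> q0 \<and> (\<Sum>k<n. q k) + q0 = 1"

definition cq :: "nat \<Rightarrow> (nat \<Rightarrow> real) \<Rightarrow> real" where
  "cq n q = - (\<Sum>k<n. ln (real n * q k)) / real n"

definition Lq :: "nat \<Rightarrow> (nat \<Rightarrow> real) \<Rightarrow> real \<Rightarrow> (nat \<Rightarrow> real) \<Rightarrow> real" where
  "Lq n q q0 x = (\<Sum>k<n. q k * x k) + q0"

lemma nuq_wf: assumes "goodq n q q0"
  shows "pmf_of_list_wf ((1, q0) # map (\<lambda>k. (x k, q k)) [0..<n])"
proof (rule pmf_of_list_wfI)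
  fix w assume "w \<in> set (map snd ((1, q0) # map (\<lambda>k. (x k, q k)) [0..<n]))"
  then show "0 \<le> w" using assms unfolding goodq_def by (auto simp: less_imp_le)
next
  have "sum_list (map snd ((1, q0) # map (\<lambda>k. (x k, q k)) [0..<n])) = q0 + sum_list (map q [0..<n])"
    by (simp add: o_def)
  also have "\<dots> = q0 + (\<Sum>k<n. q k)" by (simp add: interv_sum_list_conv_sum_set_nat atLeast0LessThan)
  finally show "sum_list (map snd ((1, q0) # map (\<lambda>k. (x k, q k)) [0..<n])) = 1"
    using assms unfolding goodq_def by simp
qed

lemma nuq_pmf: assumes "goodq n q q0"
  shows "pmf (nuq n q q0 x) y = (\<Sum>k\<in>{k. k < n \<and> x k = y}. q k) + (if y = 1 then q0 else 0)"
proof -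
  have "pmf (nuq n q q0 x) y = sum_list (map snd (filter (\<lambda>z. fst z = y) ((1, q0) # map (\<lambda>k. (x k, q k)) [0..<n])))"
    unfolding nuq_def by (rule pmf_pmf_of_list[OF nuq_wf[OF assms]])
  also have "\<dots> = (if y = 1 then q0 else 0) + sum_list (map q (filter (\<lambda>k. x k = y) [0..<n]))"
  proof -
    have H: "\<And>y. filter (\<lambda>z. fst z = y) (map (\<lambda>k. (x k, q k)) [0..<n]) = map (\<lambda>k. (x k, q k)) (filter (\<lambda>k. x k = y) [0..<n])"
      by (simp add: filter_map o_def)
    show ?thesis by (simp add: o_def H)
  qed
  also have "sum_list (map q (filter (\<lambda>k. x k = y) [0..<n])) = sum q (set (filter (\<lambda>k. x k = y) [0..<n]))"
    by (rule sum_list_distinct_conv_sum_set) simp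
  also have "set (filter (\<lambda>k. x k = y) [0..<n]) = {k. k < n \<and> x k = y}" by auto
  finally show ?thesis by simp
qed

lemma nuq_set: assumes "goodq n q q0"
  shows "set_pmf (nuq n q q0 x) \<subseteq> insert 1 (x`{..<n})" "x`{..<n} \<subseteq> set_pmf (nuq n q q0 x)"
    "finite (set_pmf (nuq n q q0 x))"
proof -
  show 1: "set_pmf (nuq n q q0 x) \<subseteq> insert 1 (x`{..<n})"
    unfolding nuq_def using set_pmf_of_list[OF nuq_wf[OF assms, of x]] by auto
  show "finite (set_pmf (nuq n q q0 x))" by (rule finite_subset[OF 1]) auto
  show "x`{..<n} \<subseteq> set_pmf (nuq n q q0 x)"
  proof
    fix y assume "y \<in> x`{..<n}"
    then obtain k where k: "k < n" "x k = y" by auto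
    have "0 < (\<Sum>k\<in>{k. k < n \<and> x k = y}. q k)"
      using k assms unfolding goodq_def by (intro sum_pos) auto
    moreover have "0 \<le> (if y = 1 then q0 else 0)" using assms unfolding goodq_def by auto
    ultimately show "y \<in> set_pmf (nuq n q q0 x)"
      by (simp add: set_pmf_eq' nuq_pmf[OF assms])
  qed
qed

lemma mean_finite: assumes "finite A" "set_pmf p \<subseteq> A"
  shows "pmf_mean p = (\<Sum>y\<in>A. pmf p y * y)"
  unfolding pmf_mean_def using assms by (subst integral_measure_pmf_real[where A=A]) (auto simp: mult.commute)

lemma sum_empty_aux: assumes "\<forall>k<n. x k \<noteq> y" shows "sum g {k. k < n \<and> x k = y} = 0"
proof -
  have "{k. k < n \<and> x k = y} = {}" using assms by blast
  then show ?thesis by (simp only: sum.empty)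
qed

lemma nuq_mean: assumes "goodq n q q0"
  shows "pmf_mean (nuq n q q0 x) = Lq n q q0 x"
proof -
  let ?A = "insert 1 (x`{..<n})"
  have "pmf_mean (nuq n q q0 x) = (\<Sum>y\<in>?A. pmf (nuq n q q0 x) y * y)"
    by (rule mean_finite) (use nuq_set[OF assms] in auto)
  also have "\<dots> = (\<Sum>y\<in>?A. (\<Sum>k\<in>{k. k < n \<and> x k = y}. q k * x k) + (if y = 1 then q0 else 0))"
  proof (rule sum.cong[OF refl])
    fix y
    have "(\<Sum>k\<in>{k. k < n \<and> x k = y}. q k) * y = (\<Sum>k\<in>{k. k < n \<and> x k = y}. q k * x k)"
      by (subst sum_distrib_right) (rule sum.cong, auto)
    moreover have "(if y = 1 then q0 else 0) * y = (if y = 1 then q0 else 0)" by auto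
    ultimately show "pmf (nuq n q q0 x) y * y = (\<Sum>k\<in>{k. k < n \<and> x k = y}. q k * x k) + (if y = 1 then q0 else 0)"
      by (simp add: nuq_pmf[OF assms] distrib_right)
  qed
  also have "\<dots> = (\<Sum>y\<in>?A. (\<Sum>k\<in>{k. k < n \<and> x k = y}. q k * x k)) + (\<Sum>y\<in>?A. (if y = 1 then q0 else 0))"
    by (rule sum.distrib)
  also have "(\<Sum>y\<in>?A. (if y = 1 then q0 else 0)) = q0"
    by (subst sum.delta) auto
  also have "(\<Sum>y\<in>?A. (\<Sum>k\<in>{k. k < n \<and> x k = y}. q k * x k)) = (\<Sum>y\<in>x`{..<n}. (\<Sum>k\<in>{k. k < n \<and> x k = y}. q k * x k))"
    apply (rule sum.mono_neutral_right)
       apply auto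
    apply (rule sum_empty_aux)
    apply auto
    done
  also have "\<dots> = (\<Sum>y\<in>x`{..<n}. (\<Sum>k\<in>{k. k \<in> {..<n} \<and> x k = y}. q k * x k))"
    by simp
  also have "\<dots> = (\<Sum>k<n. q k * x k)"
    by (rule sum.image_gen[symmetric]) simp
  finally show ?thesis unfolding Lq_def by simp
qed

lemma KL_emp: assumes "n \<ge> 1" "x`{..<n} \<subseteq> set_pmf p"
  shows "KL (empirical n x) p = ereal ((\<Sum>k<n. ln (real (mc n x (x k)) / (real n * pmf p (x k)))) / real n)"
proof -
  have "KL (empirical n x) p = ereal (\<Sum>y\<in>set_pmf (empirical n x). pmf (empirical n x) y * ln (pmf (empirical n x) y / pmf p y))"
    unfolding KL_def using assms by (simp add: emp_set)
  also have "(\<Sum>y\<in>set_pmf (empirical n x). pmf (empirical n x) y * ln (pmf (empirical n x) y / pmf p y))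
     = (\<Sum>k<n. ln (pmf (empirical n x) (x k) / pmf p (x k))) / real n"
    by (rule emp_sum[OF assms(1)])
  also have "(\<Sum>k<n. ln (pmf (empirical n x) (x k) / pmf p (x k))) = (\<Sum>k<n. ln (real (mc n x (x k)) / (real n * pmf p (x k))))"
    by (rule sum.cong) (simp_all add: emp_pmf[OF assms(1)] mc_def)
  finally show ?thesis .
qed

lemma sum_mc: "(\<Sum>y\<in>x`{..<n}. real (mc n x y)) = real n"
proof -
  have "(\<Sum>y\<in>x`{..<n}. real (mc n x y)) = (\<Sum>k<n. real (mc n x (x k)) / real (mc n x (x k)))"
    by (rule group_sum[symmetric])
  also have "\<dots> = (\<Sum>k<n. 1)" by (rule sum.cong) (use mc_pos[of _ n x] in force)+
  finally show ?thesis by simp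
qed

lemma KL_nuq: assumes "n \<ge> 1" "goodq n q q0"
  shows "KL (empirical n x) (nuq n q q0 x) \<le> ereal (cq n q)"
proof -
  let ?p = "nuq n q q0 x"
  have sub: "x`{..<n} \<subseteq> set_pmf ?p" using nuq_set[OF assms(2)] by auto
  have ppos: "pmf ?p (x k) > 0" if "k < n" for k using sub that by (auto simp: set_pmf_iff)
  have qpos: "q k > 0" if "k < n" for k using assms(2) that unfolding goodq_def by auto
  have mpos: "real (mc n x (x k)) > 0" if "k < n" for k using mc_pos[OF that] by simp
  have npos: "real n > 0" using assms by simp
  define r where "r k = real (mc n x (x k)) * q k / pmf ?p (x k)" for k
  have tm: "ln (real (mc n x (x k)) / (real n * pmf ?p (x k))) + ln (real n * q k) \<le> r k - 1" if "k < n" for k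
  proof -
    have "ln (real (mc n x (x k)) / (real n * pmf ?p (x k))) + ln (real n * q k)
       = ln (real (mc n x (x k)) / (real n * pmf ?p (x k)) * (real n * q k))"
      by (rule ln_mult_pos[symmetric]) (use ppos[OF that] qpos[OF that] mpos[OF that] npos in simp_all)
    also have "real (mc n x (x k)) / (real n * pmf ?p (x k)) * (real n * q k) = r k"
      unfolding r_def using npos by (simp add: field_simps)
    also have "ln (r k) \<le> r k - 1"
      by (rule ln_le_minus_one) (unfold r_def, use ppos[OF that] qpos[OF that] mpos[OF that] in simp)
    finally show ?thesis .
  qed
  have Q: "(\<Sum>k\<in>{k. k \<in> {..<n} \<and> x k = y}. q k) \<le> pmf ?p y" for y
    using assms(2) unfolding goodq_def by (simp add: nuq_pmf[OF assms(2)])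
  have "(\<Sum>k<n. r k) = (\<Sum>y\<in>x`{..<n}. \<Sum>k\<in>{k. k \<in> {..<n} \<and> x k = y}. r k)"
    by (rule sum.image_gen) simp
  also have "\<dots> = (\<Sum>y\<in>x`{..<n}. real (mc n x y) * ((\<Sum>k\<in>{k. k \<in> {..<n} \<and> x k = y}. q k) / pmf ?p y))"
    by (rule sum.cong[OF refl]) (auto simp: r_def sum_divide_distrib sum_distrib_left intro!: sum.cong)
  also have "\<dots> \<le> (\<Sum>y\<in>x`{..<n}. real (mc n x y) * 1)"
  proof (rule sum_mono)
    fix y assume "y \<in> x`{..<n}"
    then have "pmf ?p y > 0" using sub by (auto simp: set_pmf_iff)
    then have "(\<Sum>k\<in>{k. k \<in> {..<n} \<and> x k = y}. q k) / pmf ?p y \<le> 1" using Q[of y] by simp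
    then show "real (mc n x y) * ((\<Sum>k\<in>{k. k \<in> {..<n} \<and> x k = y}. q k) / pmf ?p y) \<le> real (mc n x y) * 1"
      by (intro mult_left_mono) auto
  qed
  also have "\<dots> = real n" using sum_mc[of n x] by simp
  finally have rs: "(\<Sum>k<n. r k) \<le> real n" .
  have "(\<Sum>k<n. ln (real (mc n x (x k)) / (real n * pmf ?p (x k))) + ln (real n * q k)) \<le> (\<Sum>k<n. r k - 1)"
    by (rule sum_mono) (use tm in auto)
  also have "\<dots> \<le> 0" using rs by (simp add: sum_subtractf)
  finally have "(\<Sum>k<n. ln (real (mc n x (x k)) / (real n * pmf ?p (x k)))) \<le> - (\<Sum>k<n. ln (real n * q k))"
    by (simp add: sum.distrib)
  then have "(\<Sum>k<n. ln (real (mc n x (x k)) / (real n * pmf ?p (x k)))) / real n \<le> cq n q"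
    unfolding cq_def using npos divide_right_mono[of _ "- (\<Sum>k<n. ln (real n * q k))" "real n"] by simp
  then show ?thesis using KL_emp[OF assms(1) sub] by simp
qed

lemma mean_le_Max: assumes "finite A" "set_pmf p \<subseteq> A"
  shows "pmf_mean p \<le> Max A"
proof -
  have ne: "A \<noteq> {}" using assms(2) set_pmf_not_empty[of p] by blast
  have "pmf_mean p = (\<Sum>y\<in>A. pmf p y * y)" by (rule mean_finite[OF assms])
  also have "\<dots> \<le> (\<Sum>y\<in>A. pmf p y * Max A)"
    by (rule sum_mono, rule mult_left_mono) (use assms ne in auto)
  also have "\<dots> = Max A" using sum_pmf_eq_1[OF assms] by (simp add: sum_distrib_right[symmetric])
  finally show ?thesis .
qed

lemma q_from_p:
  assumes n: "n \<ge> 1" and fin: "finite (set_pmf p)" and sub: "x`{..<n} \<subseteq> set_pmf p"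
    and out: "\<forall>y\<in>set_pmf p. y \<notin> x`{..<n} \<longrightarrow> y \<le> 1"
  defines "q \<equiv> \<lambda>k. pmf p (x k) / real (mc n x (x k))"
  defines "q0 \<equiv> 1 - (\<Sum>k<n. q k)"
  shows "goodq n q q0" "KL (empirical n x) p = ereal (cq n q)" "pmf_mean p \<le> Lq n q q0 x"
proof -
  have ppos: "pmf p (x k) > 0" if "k < n" for k using sub that by (auto simp: set_pmf_iff)
  have mpos: "real (mc n x (x k)) > 0" if "k < n" for k using mc_pos[OF that] by simp
  have npos: "real n > 0" using n by simp
  have Sq: "(\<Sum>k<n. q k) = (\<Sum>y\<in>x`{..<n}. pmf p y)"
    unfolding q_def by (rule group_sum)
  have tot: "(\<Sum>y\<in>set_pmf p. pmf p y) = 1" by (rule sum_pmf_eq_1[OF fin]) simp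
  have split: "(\<Sum>y\<in>set_pmf p. f y) = (\<Sum>y\<in>set_pmf p - x`{..<n}. f y) + (\<Sum>y\<in>x`{..<n}. f y)" for f :: "real \<Rightarrow> real"
    by (rule sum.subset_diff[OF sub fin])
  have "(\<Sum>y\<in>x`{..<n}. pmf p y) \<le> (\<Sum>y\<in>set_pmf p. pmf p y)"
    by (rule sum_mono2[OF fin sub]) simp
  then have q0nn: "0 \<le> q0" unfolding q0_def using Sq tot by simp
  show "goodq n q q0"
    unfolding goodq_def using q0nn ppos mpos by (auto simp: q_def q0_def)
  have "KL (empirical n x) p = ereal ((\<Sum>k<n. ln (real (mc n x (x k)) / (real n * pmf p (x k)))) / real n)"
    by (rule KL_emp[OF n sub])
  also have "(\<Sum>k<n. ln (real (mc n x (x k)) / (real n * pmf p (x k)))) = - (\<Sum>k<n. ln (real n * q k))"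
  proof -
    have "ln (real (mc n x (x k)) / (real n * pmf p (x k))) = - ln (real n * q k)" if "k < n" for k
    proof -
      have "real (mc n x (x k)) / (real n * pmf p (x k)) = inverse (real n * q k)"
        unfolding q_def using ppos[OF that] mpos[OF that] npos by (simp add: field_simps)
      then show ?thesis by (simp only: ln_inverse)
    qed
    then show ?thesis by (simp add: sum_negf[symmetric])
  qed
  finally show "KL (empirical n x) p = ereal (cq n q)" unfolding cq_def by simp
  have "pmf_mean p = (\<Sum>y\<in>set_pmf p. pmf p y * y)" by (rule mean_finite[OF fin]) simp
  also have "\<dots> = (\<Sum>y\<in>set_pmf p - x`{..<n}. pmf p y * y) + (\<Sum>y\<in>x`{..<n}. pmf p y * y)" by (rule split)
  also have "(\<Sum>y\<in>set_pmf p - x`{..<n}. pmf p y * y) \<le> (\<Sum>y\<in>set_pmf p - x`{..<n}. pmf p y)"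
    by (rule sum_mono) (use out in \<open>auto intro: mult_left_le\<close>)
  also have "(\<Sum>y\<in>set_pmf p - x`{..<n}. pmf p y) = q0"
    using split[of "pmf p"] tot Sq unfolding q0_def by simp
  also have "(\<Sum>y\<in>x`{..<n}. pmf p y * y) = (\<Sum>k<n. q k * x k)"
    unfolding q_def by (subst group_sum[symmetric]) (simp add: field_simps)
  finally show "pmf_mean p \<le> Lq n q q0 x" unfolding Lq_def by simp
qed

lemma unif_good: assumes "n \<ge> 1" shows "goodq n (\<lambda>k. 1 / real n) 0" "cq n (\<lambda>k. 1 / real n) = 0"
  using assms unfolding goodq_def cq_def by auto

lemma KL_infty: assumes "\<not> set_pmf p \<subseteq> set_pmf p'" shows "KL p p' = \<infinity>"
  using assms unfolding KL_def by simp

lemma Ucb_char: assumes n: "n \<ge> 1" and eps: "\<epsilon> \<ge> 0"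
  shows "Ucb (empirical n x) \<epsilon> \<le> \<mu> \<longleftrightarrow> (\<forall>q q0. goodq n q q0 \<and> cq n q \<le> \<epsilon> \<longrightarrow> Lq n q q0 x \<le> \<mu>)"
proof -
  let ?e = "empirical n x"
  define S where "S = {pmf_mean \<nu>' | \<nu>'. set_pmf \<nu>' \<subseteq> set_pmf ?e \<union> {1} \<and> KL ?e \<nu>' \<le> ereal \<epsilon>}"
  have U: "Ucb ?e \<epsilon> = Sup S" unfolding Ucb_def S_def by simp
  have supp: "set_pmf ?e \<union> {1} = insert 1 (x`{..<n})" using emp_set[OF n] by auto
  have inS: "Lq n q q0 x \<in> S" if g: "goodq n q q0" and c: "cq n q \<le> \<epsilon>" for q q0
  proof -
    have "set_pmf (nuq n q q0 x) \<subseteq> set_pmf ?e \<union> {1}" using nuq_set(1)[OF g] supp by auto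
    moreover have "KL ?e (nuq n q q0 x) \<le> ereal \<epsilon>" by (rule order_trans[OF KL_nuq[OF n g]]) (simp add: c)
    ultimately show ?thesis unfolding S_def mem_Collect_eq
      by (intro exI[of _ "nuq n q q0 x"] conjI) (simp_all add: nuq_mean[OF g])
  qed
  have ne: "S \<noteq> {}" using inS[OF unif_good(1)[OF n]] unif_good(2)[OF n] eps by auto
  have bdd: "bdd_above S"
  proof (rule bdd_aboveI)
    fix s assume "s \<in> S"
    then obtain \<nu>' where "s = pmf_mean \<nu>'" "set_pmf \<nu>' \<subseteq> insert 1 (x`{..<n})" unfolding S_def using supp by auto
    then show "s \<le> Max (insert 1 (x`{..<n}))" using mean_le_Max[of "insert 1 (x`{..<n})" \<nu>'] by auto
  qed
  have "Ucb ?e \<epsilon> \<le> \<mu> \<longleftrightarrow> (\<forall>s\<in>S. s \<le> \<mu>)" unfolding U by (rule cSup_le_iff[OF ne bdd])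
  also have "\<dots> \<longleftrightarrow> (\<forall>q q0. goodq n q q0 \<and> cq n q \<le> \<epsilon> \<longrightarrow> Lq n q q0 x \<le> \<mu>)"
  proof
    assume "\<forall>s\<in>S. s \<le> \<mu>" then show "\<forall>q q0. goodq n q q0 \<and> cq n q \<le> \<epsilon> \<longrightarrow> Lq n q q0 x \<le> \<mu>"
      using inS by blast
  next
    assume H: "\<forall>q q0. goodq n q q0 \<and> cq n q \<le> \<epsilon> \<longrightarrow> Lq n q q0 x \<le> \<mu>"
    show "\<forall>s\<in>S. s \<le> \<mu>"
    proof
      fix s assume "s \<in> S"
      then obtain p where s: "s = pmf_mean p" and ps: "set_pmf p \<subseteq> insert 1 (x`{..<n})"
        and kl: "KL ?e p \<le> ereal \<epsilon>" unfolding S_def using supp by auto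
      have sub: "x`{..<n} \<subseteq> set_pmf p"
      proof (rule ccontr)
        assume "\<not> x`{..<n} \<subseteq> set_pmf p"
        then have "KL ?e p = \<infinity>" using KL_infty[of ?e p] emp_set[OF n] by simp
        then show False using kl by simp
      qed
      have fin: "finite (set_pmf p)" by (rule finite_subset[OF ps]) auto
      have out: "\<forall>y\<in>set_pmf p. y \<notin> x`{..<n} \<longrightarrow> y \<le> 1" using ps by auto
      note Q = q_from_p[OF n fin sub out]
      have cc: "cq n (\<lambda>k. pmf p (x k) / real (mc n x (x k))) \<le> \<epsilon>" using kl Q(2) by simp
      have "Lq n (\<lambda>k. pmf p (x k) / real (mc n x (x k))) (1 - (\<Sum>k<n. pmf p (x k) / real (mc n x (x k)))) x \<le> \<mu>"
        using H[rule_format, OF conjI[OF Q(1) cc]] .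
      then show "s \<le> \<mu>" using Q(3) s by simp
    qed
  qed
  finally show ?thesis .
qed

lemma Kinf_char: assumes n: "n \<ge> 1"
  shows "ereal \<epsilon> \<le> Kinf (empirical n x) \<mu> \<longleftrightarrow>
     (\<not> (\<forall>k<n. x k \<in> {0..1}) \<or> (\<forall>q q0. goodq n q q0 \<and> cq n q < \<epsilon> \<longrightarrow> Lq n q q0 x \<le> \<mu>))"
proof -
  let ?e = "empirical n x"
  have K: "ereal \<epsilon> \<le> Kinf ?e \<mu> \<longleftrightarrow> (\<forall>p. p \<in> F_class \<and> pmf_mean p > \<mu> \<longrightarrow> ereal \<epsilon> \<le> KL ?e p)"
    unfolding Kinf_def le_Inf_iff by blast
  show ?thesis
  proof
    assume A: "ereal \<epsilon> \<le> Kinf ?e \<mu>"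
    show "\<not> (\<forall>k<n. x k \<in> {0..1}) \<or> (\<forall>q q0. goodq n q q0 \<and> cq n q < \<epsilon> \<longrightarrow> Lq n q q0 x \<le> \<mu>)"
    proof (cases "\<forall>k<n. x k \<in> {0..1}")
      case False then show ?thesis by blast
    next
      case cube: True
      show ?thesis
      proof (rule disjI2)
      show "\<forall>q q0. goodq n q q0 \<and> cq n q < \<epsilon> \<longrightarrow> Lq n q q0 x \<le> \<mu>"
      proof (intro allI impI, rule ccontr)
        fix q q0 assume gc: "goodq n q q0 \<and> cq n q < \<epsilon>" and L: "\<not> Lq n q q0 x \<le> \<mu>"
        have g: "goodq n q q0" using gc by simp
        have "nuq n q q0 x \<in> F_class"
          unfolding F_class_def using nuq_set[OF g, of x] cube by auto
        moreover have "pmf_mean (nuq n q q0 x) > \<mu>" using nuq_mean[OF g] L by simp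
        ultimately have "ereal \<epsilon> \<le> KL ?e (nuq n q q0 x)" using A K by blast
        also have "\<dots> \<le> ereal (cq n q)" by (rule KL_nuq[OF n g])
        finally show False using gc by simp
      qed
      qed
    qed
  next
    assume B: "\<not> (\<forall>k<n. x k \<in> {0..1}) \<or> (\<forall>q q0. goodq n q q0 \<and> cq n q < \<epsilon> \<longrightarrow> Lq n q q0 x \<le> \<mu>)"
    show "ereal \<epsilon> \<le> Kinf ?e \<mu>"
      unfolding K
    proof (intro allI impI)
      fix p assume pF: "p \<in> F_class \<and> \<mu> < pmf_mean p"
      have fin: "finite (set_pmf p)" and p01: "set_pmf p \<subseteq> {0..1}" using pF unfolding F_class_def by auto
      show "ereal \<epsilon> \<le> KL ?e p"
      proof (cases "x`{..<n} \<subseteq> set_pmf p")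
        case False
        then show ?thesis using KL_infty[of ?e p] emp_set[OF n] by simp
      next
        case sub: True
        then have cube: "\<forall>k<n. x k \<in> {0..1}" using p01 by (meson image_subset_iff lessThan_iff subset_iff)
        then have H: "\<forall>q q0. goodq n q q0 \<and> cq n q < \<epsilon> \<longrightarrow> Lq n q q0 x \<le> \<mu>" using B by blast
        have out: "\<forall>y\<in>set_pmf p. y \<notin> x`{..<n} \<longrightarrow> y \<le> 1" using p01 by auto
        note Q = q_from_p[OF n fin sub out]
        have "\<not> cq n (\<lambda>k. pmf p (x k) / real (mc n x (x k))) < \<epsilon>"
        proof
          assume c: "cq n (\<lambda>k. pmf p (x k) / real (mc n x (x k))) < \<epsilon>"
          have "Lq n (\<lambda>k. pmf p (x k) / real (mc n x (x k))) (1 - (\<Sum>k<n. pmf p (x k) / real (mc n x (x k)))) x \<le> \<mu>"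
            using H[rule_format, OF conjI[OF Q(1) c]] .
          with Q(3) pF show False by simp
        qed
        then show ?thesis using Q(2) by simp
      qed
    qed
  qed
qed

definition hh :: "real \<Rightarrow> real \<Rightarrow> real \<Rightarrow> real" where
  "hh \<mu> l y = 1 - l * (y - \<mu>) / (1 - \<mu>)"

definition TT :: "nat \<Rightarrow> (nat \<Rightarrow> real) \<Rightarrow> real \<Rightarrow> real \<Rightarrow> real" where
  "TT n x \<mu> l = (\<Sum>k<n. (x k - \<mu>) / hh \<mu> l (x k))"

lemma hh_ge: assumes "0 < \<mu>" "\<mu> < 1" "0 \<le> l" "y \<le> 1"
  shows "hh \<mu> l y \<ge> 1 - l"
proof -
  have "(y - \<mu>) / (1 - \<mu>) \<le> 1" using assms by (simp add: divide_le_eq)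
  then have "l * ((y - \<mu>) / (1 - \<mu>)) \<le> l * 1" using assms(3) by (rule mult_left_mono)
  then show ?thesis unfolding hh_def by simp
qed

lemma hh_nonneg: assumes "0 < \<mu>" "\<mu> < 1" "0 \<le> l" "l \<le> 1" "y \<le> 1"
  shows "hh \<mu> l y \<ge> 0"
  using hh_ge[OF assms(1,2,3,5)] assms(4) by linarith

lemma hh_pos1: assumes "0 < \<mu>" "\<mu> < 1" "0 \<le> l" "l \<le> 1" "y < 1"
  shows "hh \<mu> l y > 0"
proof -
  have a: "(y - \<mu>) / (1 - \<mu>) < 1" using assms by (simp add: divide_less_eq)
  show ?thesis
  proof (cases "y \<le> \<mu>")
    case True
    then have "l * (y - \<mu>) / (1 - \<mu>) \<le> 0" using assms
      by (simp add: divide_nonpos_pos mult_nonneg_nonpos)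
    then show ?thesis unfolding hh_def by simp
  next
    case False
    then have "l * ((y - \<mu>) / (1 - \<mu>)) \<le> 1 * ((y - \<mu>) / (1 - \<mu>))" using assms
      by (intro mult_right_mono) auto
    then show ?thesis unfolding hh_def using a by simp
  qed
qed

lemma hh_pos2: assumes "0 < \<mu>" "\<mu> < 1" "0 \<le> l" "l < 1" "y \<le> 1"
  shows "hh \<mu> l y > 0"
  using hh_ge[OF assms(1,2,3,5)] assms(4) by linarith

lemma TT_cont: assumes "0 < \<mu>" "\<mu> < 1" "\<forall>l\<in>{a..b}. \<forall>k<n. hh \<mu> l (x k) \<noteq> 0"
  shows "continuous_on {a..b} (TT n x \<mu>)"
proof -
  have "continuous_on {a..b} (\<lambda>l. (\<Sum>k<n. (x k - \<mu>) / hh \<mu> l (x k)))"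
    using assms unfolding hh_def by (intro continuous_intros) auto
  then show ?thesis unfolding TT_def[abs_def] .
qed

lemma TT0: "TT n x \<mu> 0 = (\<Sum>k<n. x k) - real n * \<mu>"
  unfolding TT_def hh_def by (simp add: sum_subtractf)

lemma exists_lambda:
  assumes "0 < \<mu>" "\<mu> < 1" and cube: "\<forall>k<n. x k \<in> {0..1}" and mean: "(\<Sum>k<n. x k) < real n * \<mu>"
  shows "\<exists>l. 0 < l \<and> l \<le> 1 \<and> (\<forall>k<n. hh \<mu> l (x k) > 0) \<and> (TT n x \<mu> l = 0 \<or> (l = 1 \<and> TT n x \<mu> 1 \<le> 0))"
proof (cases "\<exists>k0<n. x k0 = 1")
  case True
  then obtain k0 where k0: "k0 < n" "x k0 = 1" by auto
  then have npos: "n \<ge> 1" by simp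
  define l1 where "l1 = 1 - (1 - \<mu>) / (real n * \<mu> + 1)"
  have d: "(1 - \<mu>) / (real n * \<mu> + 1) > 0"
    by (intro divide_pos_pos) (use assms in \<open>auto intro!: add_nonneg_pos\<close>)
  have pos: "real n * \<mu> + 1 > 0" using assms by (simp add: add_nonneg_pos)
  have "real n * \<mu> \<ge> 0" using assms by simp
  then have lt: "1 - \<mu> < real n * \<mu> + 1" using assms by linarith
  have d1: "(1 - \<mu>) / (real n * \<mu> + 1) < 1" using pos lt by simp
  have l1: "0 < l1" "l1 < 1" unfolding l1_def using d d1 by auto
  have hpos: "hh \<mu> l (x k) > 0" if "0 \<le> l" "l \<le> l1" "k < n" for l k
    using hh_pos2[OF assms(1,2) that(1)] l1 that cube by auto
  have tk0: "(x k0 - \<mu>) / hh \<mu> l1 (x k0) = real n * \<mu> + 1"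
  proof -
    have "hh \<mu> l1 (x k0) = 1 - l1" unfolding hh_def k0 using assms by simp
    also have "\<dots> = (1 - \<mu>) / (real n * \<mu> + 1)" unfolding l1_def by simp
    finally show ?thesis using k0 d assms by (simp add: field_simps)
  qed
  have tk: "(x k - \<mu>) / hh \<mu> l1 (x k) \<ge> - \<mu>" if "k < n" for k
  proof (cases "x k \<le> \<mu>")
    case True
    have h1: "hh \<mu> l1 (x k) \<ge> 1" unfolding hh_def using True l1 assms
      by (simp add: divide_nonpos_pos mult_nonneg_nonpos)
    have "(x k - \<mu>) * hh \<mu> l1 (x k) \<le> (x k - \<mu>) * 1"
      using True h1 by (intro mult_left_mono_neg) auto
    then have "(x k - \<mu>) / hh \<mu> l1 (x k) \<ge> (x k - \<mu>)"
      using h1 by (subst pos_le_divide_eq) auto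
    then show ?thesis using cube that by auto
  next
    case False
    have "0 \<le> (x k - \<mu>) / hh \<mu> l1 (x k)"
      using hpos[of l1 k] that l1 False by (intro divide_nonneg_pos) auto
    then show ?thesis using assms by linarith
  qed
  have eqT: "TT n x \<mu> l1 = (x k0 - \<mu>) / hh \<mu> l1 (x k0) + (\<Sum>k\<in>{..<n} - {k0}. (x k - \<mu>) / hh \<mu> l1 (x k))"
    unfolding TT_def by (rule sum.remove) (use k0 in auto)
  have "(\<Sum>k\<in>{..<n} - {k0}. (x k - \<mu>) / hh \<mu> l1 (x k)) \<ge> (\<Sum>k\<in>{..<n} - {k0}. - \<mu>)"
    by (rule sum_mono) (use tk in auto)
  then have "(\<Sum>k\<in>{..<n} - {k0}. (x k - \<mu>) / hh \<mu> l1 (x k)) \<ge> - (real n - 1) * \<mu>"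
    using k0 by (simp add: card_Diff_singleton of_nat_diff algebra_simps)
  then have "TT n x \<mu> l1 \<ge> real n * \<mu> + 1 - (real n - 1) * \<mu>" using tk0 eqT by linarith
  moreover have "real n * \<mu> + 1 - (real n - 1) * \<mu> = \<mu> + 1" by (simp add: algebra_simps)
  ultimately have Tl1: "TT n x \<mu> l1 > 0" using assms by linarith
  have T0: "TT n x \<mu> 0 \<le> 0" using mean TT0[of n x \<mu>] by simp
  have "continuous_on {0..l1} (TT n x \<mu>)"
    by (rule TT_cont[OF assms(1,2)]) (use hpos in \<open>fastforce\<close>)
  then obtain l where l: "0 \<le> l" "l \<le> l1" "TT n x \<mu> l = 0"
    using IVT'[of "TT n x \<mu>" 0 0 l1] T0 Tl1 l1 by auto
  have "l \<noteq> 0" using l(3) mean TT0[of n x \<mu>] by auto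
  then show ?thesis using l l1 hpos by (intro exI[of _ l]) auto
next
  case False
  then have lt1: "x k < 1" if "k < n" for k using cube that by force
  have hpos: "hh \<mu> l (x k) > 0" if "0 \<le> l" "l \<le> 1" "k < n" for l k
    using hh_pos1[OF assms(1,2) that(1,2) lt1[OF that(3)]] .
  show ?thesis
  proof (cases "TT n x \<mu> 1 \<le> 0")
    case True
    then show ?thesis using hpos by (intro exI[of _ 1]) auto
  next
    case False
    have T0: "TT n x \<mu> 0 \<le> 0" using mean TT0[of n x \<mu>] by simp
    have "continuous_on {0..1} (TT n x \<mu>)"
      by (rule TT_cont[OF assms(1,2)]) (use hpos in \<open>fastforce\<close>)
    then obtain l where l: "0 \<le> l" "l \<le> 1" "TT n x \<mu> l = 0"
      using IVT'[of "TT n x \<mu>" 0 0 1] T0 False by auto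
    have "l \<noteq> 0" using l(3) mean TT0[of n x \<mu>] by auto
    then show ?thesis using l hpos by (intro exI[of _ l]) auto
  qed
qed

lemma mean_case:
  assumes n: "n \<ge> 1" and mu: "0 < \<mu>" "\<mu> < 1" and eps: "\<epsilon> > 0" and mean: "(\<Sum>k<n. x k) \<ge> real n * \<mu>"
  shows "\<exists>q q0. goodq n q q0 \<and> cq n q < \<epsilon> \<and> Lq n q q0 x > \<mu>"
proof -
  define th where "th = exp (- \<epsilon> / 2)"
  have th: "0 < th" "th < 1" unfolding th_def using eps by auto
  define q where "q = (\<lambda>k::nat. th / real n)"
  have npos: "real n > 0" using n by simp
  have g: "goodq n q (1 - th)" unfolding goodq_def q_def using th npos by auto
  have "cq n q = - (\<Sum>k<n. ln th) / real n" unfolding cq_def q_def using npos by simp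
  also have "\<dots> = \<epsilon> / 2" using npos by (simp add: th_def)
  finally have c: "cq n q < \<epsilon>" using eps by simp
  have L: "Lq n q (1 - th) x = th / real n * (\<Sum>k<n. x k) + (1 - th)"
    unfolding Lq_def q_def by (simp add: sum_distrib_left)
  have "th / real n * (\<Sum>k<n. x k) \<ge> th / real n * (real n * \<mu>)"
    using mean th npos by (intro mult_left_mono) auto
  then have m1: "th / real n * (\<Sum>k<n. x k) \<ge> th * \<mu>" using npos by simp
  have "(1 - th) * \<mu> < 1 - th" using mult_strict_left_mono[of \<mu> 1 "1 - th"] th mu by simp
  moreover have "(1 - th) * \<mu> = \<mu> - th * \<mu>" by (simp add: algebra_simps)
  ultimately have "Lq n q (1 - th) x > \<mu>" using L m1 th by linarith
  then show ?thesis using g c by blast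
qed

lemma build_q:
  assumes n: "n \<ge> 1" and mu: "0 < \<mu>" "\<mu> < 1" and l: "0 < l" "l \<le> 1"
    and hpos: "\<forall>k<n. hh \<mu> l (x k) > 0"
    and T: "TT n x \<mu> l = 0 \<or> (l = 1 \<and> TT n x \<mu> 1 \<le> 0)"
    and P: "(\<Prod>k<n. hh \<mu> l (x k)) < exp (real n * \<epsilon>)"
  shows "\<exists>q q0. goodq n q q0 \<and> cq n q < \<epsilon> \<and> Lq n q q0 x > \<mu>"
proof -
  define h where "h k = hh \<mu> l (x k)" for k
  have hp: "h k > 0" if "k < n" for k using hpos that unfolding h_def by auto
  have npos: "real n > 0" using n by simp
  define G where "G = (\<Sum>k<n. ln (h k))"
  have "G = ln (\<Prod>k<n. h k)" unfolding G_def by (rule ln_prod[symmetric]) (use hp in force)+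
  also have "\<dots> < real n * \<epsilon>"
  proof -
    have "(\<Prod>k<n. h k) > 0" using hp by (intro prod_pos) auto
    then have "ln (\<Prod>k<n. h k) < ln (exp (real n * \<epsilon>))"
      using P unfolding h_def by (subst ln_less_cancel_iff) auto
    then show ?thesis by simp
  qed
  finally have Gl: "G < real n * \<epsilon>" .
  define D where "D = \<epsilon> - G / real n"
  have Dp: "D > 0" unfolding D_def using Gl npos by (simp add: field_simps)
  define th where "th = exp (- D / 2)"
  have th: "0 < th" "th < 1" unfolding th_def using Dp by auto
  define T where "T = TT n x \<mu> l"
  define S where "S = (\<Sum>k<n. 1 / h k)"
  have term1: "1 / h k = 1 + l / (1 - \<mu>) * ((x k - \<mu>) / h k)" if "k < n" for k
  proof -
    have "1 - h k = l * (x k - \<mu>) / (1 - \<mu>)" unfolding h_def hh_def by simp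
    then have e: "l / (1 - \<mu>) * ((x k - \<mu>) / h k) = (1 - h k) / h k" by simp
    have "1 / h k = 1 + (1 - h k) / h k" using hp[OF that] by (simp add: diff_divide_distrib)
    then show ?thesis using e by simp
  qed
  have SI: "S = real n + l / (1 - \<mu>) * T"
    unfolding S_def T_def TT_def using term1 by (simp add: sum.distrib sum_distrib_left h_def)
  have Tle: "T \<le> 0" using T unfolding T_def by auto
  have lT: "(1 - l) * T = 0" using T unfolding T_def by auto
  have "l / (1 - \<mu>) * T \<le> 0" using Tle l mu by (intro mult_nonneg_nonpos) auto
  then have Sle: "S \<le> real n" using SI by simp
  define q where "q k = th / (real n * h k)" for k
  define q0 where "q0 = 1 - th * S / real n"
  have sq: "(\<Sum>k<n. q k) = th * S / real n"
    unfolding q_def S_def by (simp add: sum_divide_distrib sum_distrib_left mult.commute)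
  have "th * S / real n \<le> th * real n / real n" using Sle th npos by (intro divide_right_mono mult_left_mono) auto
  then have "th * S / real n \<le> th" using npos by simp
  then have q0nn: "q0 \<ge> 0" unfolding q0_def using th by simp
  have g: "goodq n q q0" unfolding goodq_def using q0nn sq hp th npos
    by (auto simp: q_def q0_def intro!: divide_pos_pos)
  have "(\<Sum>k<n. ln (real n * q k)) = (\<Sum>k<n. ln th - ln (h k))"
  proof (rule sum.cong[OF refl])
    fix k assume "k \<in> {..<n}"
    then have "h k > 0" using hp by auto
    then have "real n * q k = th / h k" unfolding q_def using npos by simp
    then show "ln (real n * q k) = ln th - ln (h k)" using th \<open>h k > 0\<close> by (simp add: ln_div)
  qed
  also have "\<dots> = real n * ln th - G" unfolding G_def by (simp add: sum_subtractf)
  finally have "cq n q = - ln th + G / real n" unfolding cq_def using npos by (simp add: field_simps)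
  also have "\<dots> = \<epsilon> - D / 2" unfolding th_def D_def by (simp add: field_simps)
  finally have c: "cq n q < \<epsilon>" using Dp by simp
  have xs: "(\<Sum>k<n. x k / h k) = T + \<mu> * S"
  proof -
    have "(\<Sum>k<n. x k / h k) = (\<Sum>k<n. (x k - \<mu>) / h k + \<mu> * (1 / h k))"
      by (rule sum.cong) (auto simp: field_simps diff_divide_distrib)
    then show ?thesis unfolding T_def TT_def S_def by (simp add: sum.distrib sum_distrib_left h_def)
  qed
  have "Lq n q q0 x = th / real n * (\<Sum>k<n. x k / h k) + q0"
    unfolding Lq_def q_def by (simp add: sum_distrib_left)
  also have "\<dots> = 1 + th / real n * (T - (1 - \<mu>) * S)"
    unfolding xs q0_def using npos by (simp add: field_simps)
  also have "T - (1 - \<mu>) * S = (1 - l) * T - (1 - \<mu>) * real n"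
    unfolding SI using mu by (simp add: field_simps)
  also have "\<dots> = - (1 - \<mu>) * real n" using lT by (simp only: diff_0 minus_mult_left)
  also have "1 + th / real n * (- (1 - \<mu>) * real n) = 1 - th * (1 - \<mu>)" using npos by (simp add: algebra_simps)
  finally have "Lq n q q0 x = 1 - th * (1 - \<mu>)" .
  moreover have "th * (1 - \<mu>) < 1 * (1 - \<mu>)" using th mu by (intro mult_strict_right_mono) auto
  ultimately have "Lq n q q0 x > \<mu>" by simp
  then show ?thesis using g c by blast
qed

lemma key_lambda:
  assumes n: "n \<ge> 1" and mu: "0 < \<mu>" "\<mu> < 1" and eps: "\<epsilon> > 0"
    and cube: "\<forall>k<n. x k \<in> {0..1}"
    and H: "\<forall>q q0. goodq n q q0 \<and> cq n q < \<epsilon> \<longrightarrow> Lq n q q0 x \<le> \<mu>"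
  shows "\<exists>l. 0 \<le> l \<and> l \<le> 1 \<and> exp (real n * \<epsilon>) \<le> (\<Prod>k<n. hh \<mu> l (x k))"
proof (rule ccontr)
  assume C: "\<not> ?thesis"
  have C': "\<not> exp (real n * \<epsilon>) \<le> (\<Prod>k<n. hh \<mu> l (x k))" if "0 \<le> l" "l \<le> 1" for l
    using C that by blast
  have noq: "\<not> (goodq n q q0 \<and> cq n q < \<epsilon> \<and> Lq n q q0 x > \<mu>)" for q q0
  proof
    assume A: "goodq n q q0 \<and> cq n q < \<epsilon> \<and> Lq n q q0 x > \<mu>"
    then have "Lq n q q0 x \<le> \<mu>" using H by blast
    then show False using A by simp
  qed
  show False
  proof (cases "(\<Sum>k<n. x k) \<ge> real n * \<mu>")
    case True
    then obtain q q0 where "goodq n q q0 \<and> cq n q < \<epsilon> \<and> Lq n q q0 x > \<mu>"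
      using mean_case[OF n mu eps True] by blast
    then show False using noq by blast
  next
    case False
    then have F: "(\<Sum>k<n. x k) < real n * \<mu>" by simp
    obtain l where l: "0 < l" "l \<le> 1" "\<forall>k<n. hh \<mu> l (x k) > 0"
        "TT n x \<mu> l = 0 \<or> (l = 1 \<and> TT n x \<mu> 1 \<le> 0)"
      using exists_lambda[OF mu cube F] by blast
    have "(\<Prod>k<n. hh \<mu> l (x k)) < exp (real n * \<epsilon>)" using C'[of l] l(1,2) by simp
    then obtain q q0 where "goodq n q q0 \<and> cq n q < \<epsilon> \<and> Lq n q q0 x > \<mu>"
      using build_q[OF n mu l] by blast
    then show False using noq by blast
  qed
qed

lemma hh_alt: "hh \<mu> l y = 1 - l * ((y - \<mu>) / (1 - \<mu>))"
  unfolding hh_def by simp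

lemma hh_scale1: assumes "\<mu> < 1" "0 \<le> th" "th \<le> 1"
  shows "th * hh \<mu> l y \<le> hh \<mu> (th * l) y"
proof -
  have "hh \<mu> (th * l) y = th * hh \<mu> l y + (1 - th)"
    unfolding hh_alt by (simp add: algebra_simps)
  then show ?thesis using assms by simp
qed

lemma hh_scale2: assumes "\<mu> < 1" "0 \<le> th" "th \<le> 1" "y \<le> 1"
  shows "th * hh \<mu> l y \<le> hh \<mu> (1 - th * (1 - l)) y"
proof -
  have A: "\<And>a. 1 - (1 - th * (1 - l)) * a = th * (1 - l * a) + (1 - th) * (1 - 1 * a)"
    by (simp add: algebra_simps)
  have "hh \<mu> (1 - th * (1 - l)) y = th * hh \<mu> l y + (1 - th) * hh \<mu> 1 y"
    unfolding hh_alt by (rule A)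
  moreover have "hh \<mu> 1 y \<ge> 0" unfolding hh_def using assms by (simp add: divide_le_eq)
  ultimately show ?thesis using assms by simp
qed

lemma grid:
  assumes n: "n \<ge> 1" and mu: "0 < \<mu>" "\<mu> < 1" and l: "0 \<le> l" "l \<le> 1"
  shows "\<exists>j. j \<le> n + 1 \<and> (\<exists>th. real n / (real n + 1) \<le> th \<and> th \<le> 1 \<and>
           (\<forall>y\<le>1. th * hh \<mu> l y \<le> hh \<mu> (real j / (real n + 1)) y))"
proof -
  define N where "N = real n + 1"
  have Npos: "N > 0" unfolding N_def by simp
  define j where "j = nat \<lfloor>l * N\<rfloor>"
  have lN: "0 \<le> l * N" using l Npos by simp
  have j1: "real j \<le> l * N" unfolding j_def using lN by (simp add: of_nat_nat)
  have j2: "l * N < real j + 1" unfolding j_def using lN by (simp add: of_nat_nat)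
  have jN: "real j \<le> N" using j1 l Npos by (smt (verit) mult_left_le_one_le)
  show ?thesis
  proof (cases "real j \<ge> real n * l")
    case True
    show ?thesis
    proof (cases "l = 0")
      case True
      then have "j = 0" unfolding j_def by simp
      then show ?thesis using True n by (intro exI[of _ 0]) (auto intro!: exI[of _ 1] simp: field_simps)
    next
      case False
      then have lp: "l > 0" using l by simp
      define th where "th = (real j / N) / l"
      have thl: "th * l = real j / N" unfolding th_def using lp by simp
      have th1: "th \<le> 1" unfolding th_def using j1 lp Npos by (simp add: field_simps)
      have th0: "th \<ge> 0" unfolding th_def using lp Npos by simp
      have thn: "real n / N \<le> th" unfolding th_def using True lp Npos by (simp add: field_simps)
      have "j \<le> n + 1" using jN unfolding N_def by linarith
      moreover have "\<forall>y\<le>1. th * hh \<mu> l y \<le> hh \<mu> (real j / (real n + 1)) y"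
        using hh_scale1[OF mu(2) th0 th1, of l] thl unfolding N_def by auto
      ultimately show ?thesis using thn th1 unfolding N_def by blast
    qed
  next
    case False
    have ln: "l * real n \<le> real n" using l by (simp add: mult_left_le_one_le)
    have jn: "real j + 1 \<le> N" using False ln unfolding N_def by (simp add: mult.commute)
    have l1: "l < 1" using False j2 unfolding N_def using l by (cases "l = 1") auto
    define lam where "lam = (real j + 1) / N"
    have lam1: "lam \<le> 1" unfolding lam_def using jn Npos by simp
    have laml: "l \<le> lam" unfolding lam_def using j2 Npos by (simp add: field_simps)
    define th where "th = (1 - lam) / (1 - l)"
    have th0: "th \<ge> 0" unfolding th_def using lam1 l1 by simp
    have th1: "th \<le> 1" unfolding th_def using laml l1 by simp
    have thlam: "1 - th * (1 - l) = lam" unfolding th_def using l1 by simp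
    have thn: "real n / N \<le> th"
    proof -
      have "real n * (1 - l) \<le> N - (real j + 1)" using False unfolding N_def by (simp add: algebra_simps)
      then have "real n * (1 - l) / N \<le> (N - (real j + 1)) / N" using Npos by (intro divide_right_mono) auto
      also have "(N - (real j + 1)) / N = 1 - lam" unfolding lam_def using Npos by (simp add: diff_divide_distrib)
      finally have "real n * (1 - l) / N \<le> 1 - lam" .
      then show ?thesis unfolding th_def using l1 Npos by (simp add: field_simps)
    qed
    have "Suc j \<le> n + 1" using jn unfolding N_def by linarith
    moreover have "\<forall>y\<le>1. th * hh \<mu> l y \<le> hh \<mu> (real (Suc j) / (real n + 1)) y"
    proof (intro allI impI)
      fix y :: real assume "y \<le> 1"
      have "th * hh \<mu> l y \<le> hh \<mu> (1 - th * (1 - l)) y" by (rule hh_scale2[OF mu(2) th0 th1 \<open>y \<le> 1\<close>])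
      also have "1 - th * (1 - l) = real (Suc j) / (real n + 1)" using thlam unfolding lam_def N_def by simp
      finally show "th * hh \<mu> l y \<le> hh \<mu> (real (Suc j) / (real n + 1)) y" .
    qed
    ultimately show ?thesis using thn th1 unfolding N_def by blast
  qed
qed

lemma exp_bound: assumes "n \<ge> 1" shows "exp (-1) \<le> (real n / (real n + 1)) ^ n"
proof -
  have npos: "real n > 0" using assms by simp
  have "1 + 1 / real n \<le> exp (1 / real n)" by (rule exp_ge_add_one_self)
  then have "1 / exp (1 / real n) \<le> 1 / (1 + 1 / real n)" using npos
    by (intro divide_left_mono) (auto intro!: mult_pos_pos add_pos_pos)
  also have "1 / (1 + 1 / real n) = real n / (real n + 1)" using npos by (simp add: field_simps)
  finally have e: "exp (- (1 / real n)) \<le> real n / (real n + 1)" by (simp add: exp_minus field_simps)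
  have "exp (- (1 / real n)) ^ n \<le> (real n / (real n + 1)) ^ n" by (rule power_mono[OF e]) simp
  moreover have "exp (- (1 / real n)) ^ n = exp (-1)" using npos by (simp add: exp_of_nat_mult[symmetric])
  ultimately show ?thesis by simp
qed

lemma grid_prod:
  assumes n: "n \<ge> 1" and mu: "0 < \<mu>" "\<mu> < 1" and l: "0 \<le> l" "l \<le> 1"
    and cube: "\<forall>k<n. x k \<in> {0..1}"
    and P: "a \<le> (\<Prod>k<n. hh \<mu> l (x k))" and a: "a \<ge> 0"
  shows "\<exists>j\<le>n + 1. a * exp (-1) \<le> (\<Prod>k<n. hh \<mu> (real j / (real n + 1)) (x k))"
proof -
  obtain j th where j: "j \<le> n + 1" and th: "real n / (real n + 1) \<le> th" "th \<le> 1"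
    and hhle: "\<forall>y\<le>1. th * hh \<mu> l y \<le> hh \<mu> (real j / (real n + 1)) y"
    using grid[OF n mu l] by blast
  have th0: "th \<ge> 0" using th(1) by (smt (verit) divide_nonneg_nonneg of_nat_0_le_iff)
  have "(\<Prod>k<n. th * hh \<mu> l (x k)) \<le> (\<Prod>k<n. hh \<mu> (real j / (real n + 1)) (x k))"
    by (rule prod_mono) (use hhle cube th0 hh_nonneg[OF mu l] in auto)
  moreover have "(\<Prod>k<n. th * hh \<mu> l (x k)) = th ^ n * (\<Prod>k<n. hh \<mu> l (x k))"
    by (simp add: prod.distrib)
  moreover have "exp (-1) * a \<le> th ^ n * (\<Prod>k<n. hh \<mu> l (x k))"
  proof (rule mult_mono)
    show "exp (-1) \<le> th ^ n"
      using exp_bound[OF n] power_mono[OF th(1), of n] by (smt (verit) divide_nonneg_nonneg of_nat_0_le_iff)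
  qed (use P a th0 in auto)
  ultimately show ?thesis using j by (auto simp: mult.commute)
qed

lemma prob_part:
  fixes M :: "'a measure" and \<nu>0 :: "real measure" and X :: "nat \<Rightarrow> 'a \<Rightarrow> real"
  assumes PM: "prob_space M"
    and PV: "prob_space \<nu>0" and sv: "sets \<nu>0 = sets borel" and m01: "measure \<nu>0 {0..1} = 1"
    and mu_def: "\<mu> = (\<integral>x. x \<partial>\<nu>0)"
    and ind: "prob_space.indep_vars M (\<lambda>_. borel) X {..<n}"
    and dist: "\<And>i. i < n \<Longrightarrow> distr M borel (X i) = \<nu>0"
  shows "\<And>k. k < n \<Longrightarrow> X k \<in> borel_measurable M"
    and "AE \<omega> in M. \<forall>k\<in>{..<n}. X k \<omega> \<in> {0..1}"
    and "\<And>l c. 0 < \<mu> \<Longrightarrow> \<mu> < 1 \<Longrightarrow> 0 \<le> l \<Longrightarrow> l \<le> 1 \<Longrightarrow> c > 0 \<Longrightarrow>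
           measure M {\<omega>\<in>space M. c \<le> (\<Prod>k<n. hh \<mu> l (X k \<omega>))} \<le> 1 / c"
proof -
  interpret P: prob_space M by (rule PM)
  interpret V: prob_space \<nu>0 by (rule PV)
  show meas: "X k \<in> borel_measurable M" if "k < n" for k
    using ind that unfolding P.indep_vars_def by auto
  have spV: "space \<nu>0 = UNIV" using sets_eq_imp_space_eq[OF sv] by simp
  have mV: "f \<in> borel_measurable \<nu>0" if "f \<in> borel_measurable borel" for f :: "real \<Rightarrow> real"
    using that by (subst measurable_cong_sets[OF sv refl])
  have AEV: "AE y in \<nu>0. y \<in> {0..1}" by (rule V.AE_prob_1) (use m01 in simp)
  have AEk: "AE \<omega> in M. X k \<omega> \<in> {0..1}" if "k < n" for k
  proof -
    have "AE y in distr M borel (X k). y \<in> {0..1}" unfolding dist[OF that] by (rule AEV)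
    moreover have "{y \<in> space borel. y \<in> {0..1::real}} \<in> sets borel" by simp
    ultimately show ?thesis using AE_distr_iff[OF meas[OF that], of "\<lambda>y. y \<in> {0..1}"] by blast
  qed
  show AEM: "AE \<omega> in M. \<forall>k\<in>{..<n}. X k \<omega> \<in> {0..1}" by (rule AE_finite_allI) (use AEk in auto)
  fix l c :: real assume mu: "0 < \<mu>" "\<mu> < 1" and l01: "0 \<le> l" "l \<le> 1" and c: "c > 0"
  have intid: "integrable \<nu>0 (\<lambda>y. y)"
  proof (rule V.integrable_const_bound[where B=1])
    show "AE y in \<nu>0. norm y \<le> 1" using AEV by eventually_elim auto
    show "(\<lambda>y. y) \<in> borel_measurable \<nu>0" by (rule mV) simp
  qed
  have hhm: "hh \<mu> l \<in> borel_measurable borel" unfolding hh_def[abs_def] by measurable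
  have int2: "integrable \<nu>0 (\<lambda>y. y - \<mu>)" by (rule Bochner_Integration.integrable_diff[OF intid V.integrable_const])
  have int3: "integrable \<nu>0 (\<lambda>y. (l / (1 - \<mu>)) * (y - \<mu>))" by (rule Bochner_Integration.integrable_mult_right[OF int2])
  have hhe: "hh \<mu> l = (\<lambda>y. 1 - (l / (1 - \<mu>)) * (y - \<mu>))" unfolding hh_def[abs_def] by simp
  have inthh: "integrable \<nu>0 (hh \<mu> l)"
    unfolding hhe by (rule Bochner_Integration.integrable_diff[OF V.integrable_const int3])
  have e1: "(\<integral>y. hh \<mu> l y \<partial>\<nu>0) = (\<integral>y. 1 \<partial>\<nu>0) - (\<integral>y. (l / (1 - \<mu>)) * (y - \<mu>) \<partial>\<nu>0)"
    unfolding hhe by (rule Bochner_Integration.integral_diff[OF V.integrable_const int3])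
  have e2: "(\<integral>y. (l / (1 - \<mu>)) * (y - \<mu>) \<partial>\<nu>0) = (l / (1 - \<mu>)) * (\<integral>y. (y - \<mu>) \<partial>\<nu>0)"
    by (rule Bochner_Integration.integral_mult_right[OF int2])
  have e3: "(\<integral>y. (y - \<mu>) \<partial>\<nu>0) = (\<integral>y. y \<partial>\<nu>0) - (\<integral>y. \<mu> \<partial>\<nu>0)"
    by (rule Bochner_Integration.integral_diff[OF intid V.integrable_const])
  have e4: "(\<integral>y. 1 \<partial>\<nu>0) = (1::real)" by (simp add: V.prob_space)
  have e5: "(\<integral>y. \<mu> \<partial>\<nu>0) = \<mu>" by (simp add: V.prob_space)
  have Ehh: "(\<integral>y. hh \<mu> l y \<partial>\<nu>0) = 1" using e1 e2 e3 e4 e5 mu_def by simp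
  have intk: "integrable M (\<lambda>\<omega>. hh \<mu> l (X k \<omega>))" if "k < n" for k
    using inthh dist[OF that] integrable_distr_eq[OF meas[OF that] hhm] by simp
  have Ek: "(\<integral>\<omega>. hh \<mu> l (X k \<omega>) \<partial>M) = 1" if "k < n" for k
    using Ehh dist[OF that] integral_distr[OF meas[OF that] hhm] by simp
  have ind2: "P.indep_vars (\<lambda>_. borel) (\<lambda>k \<omega>. hh \<mu> l (X k \<omega>)) {..<n}"
    by (rule P.indep_vars_compose2[OF ind]) (use hhm in simp)
  have intP: "integrable M (\<lambda>\<omega>. \<Prod>k<n. hh \<mu> l (X k \<omega>))"
    by (rule P.indep_vars_integrable[OF _ ind2]) (use intk in auto)
  have EP: "(\<integral>\<omega>. (\<Prod>k<n. hh \<mu> l (X k \<omega>)) \<partial>M) = 1"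
    using P.indep_vars_lebesgue_integral[OF _ ind2] intk Ek by simp
  have nn: "AE \<omega> in M. 0 \<le> (\<Prod>k<n. hh \<mu> l (X k \<omega>))"
    using AEM
  proof (rule AE_mp, intro AE_I2 impI)
    fix \<omega> assume "\<forall>k\<in>{..<n}. X k \<omega> \<in> {0..1}"
    then show "0 \<le> (\<Prod>k<n. hh \<mu> l (X k \<omega>))"
      by (intro prod_nonneg) (use hh_nonneg[OF mu l01] in auto)
  qed
  have "measure M {\<omega>\<in>space M. (\<Prod>k<n. hh \<mu> l (X k \<omega>)) \<ge> c} \<le> (\<integral>\<omega>. (\<Prod>k<n. hh \<mu> l (X k \<omega>)) \<partial>M) / c"
    by (rule integral_Markov_inequality_measure[OF intP _ nn c, of "space M"]) simp
  then show "measure M {\<omega>\<in>space M. c \<le> (\<Prod>k<n. hh \<mu> l (X k \<omega>))} \<le> 1 / c" using EP by simp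
qed

lemma cont_Lq: "continuous_on UNIV (\<lambda>x::nat\<Rightarrow>real. Lq n q q0 x)"
  unfolding Lq_def by (intro continuous_intros continuous_on_product_coordinates)

lemma closed_const_imp:
  assumes "closed {x. Q x}" shows "closed {x. P \<longrightarrow> Q x}"
  using assms by (cases P) auto

lemma closed_SU: "closed {x::nat\<Rightarrow>real. \<forall>q q0. goodq n q q0 \<and> cq n q \<le> \<epsilon> \<longrightarrow> Lq n q q0 x \<le> \<mu>}"
  by (intro closed_Collect_all closed_const_imp closed_Collect_le cont_Lq continuous_on_const)

lemma closed_SK: "closed {x::nat\<Rightarrow>real. \<forall>q q0. goodq n q q0 \<and> cq n q < \<epsilon> \<longrightarrow> Lq n q q0 x \<le> \<mu>}"
  by (intro closed_Collect_all closed_const_imp closed_Collect_le cont_Lq continuous_on_const)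

lemma closed_cube: "closed {x::nat\<Rightarrow>real. \<forall>k<n. x k \<in> {0..1}}"
proof -
  have "{x::nat\<Rightarrow>real. \<forall>k<n. x k \<in> {0..1}} = {x. \<forall>k. k < n \<longrightarrow> (0 \<le> x k \<and> x k \<le> 1)}" by auto
  also have "closed \<dots>"
    by (intro closed_Collect_all closed_const_imp closed_Collect_conj closed_Collect_le
        continuous_on_product_coordinates continuous_on_const)
  finally show ?thesis .
qed

lemma xv_meas:
  assumes "\<And>k. k < n \<Longrightarrow> X k \<in> borel_measurable M"
  shows "(\<lambda>\<omega>. \<lambda>k::nat. if k < n then X k \<omega> else (0::real)) \<in> borel_measurable M"
proof (rule measurable_coordinatewise_then_product)
  fix i show "(\<lambda>\<omega>. if i < n then X i \<omega> else 0) \<in> borel_measurable M"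
    using assms by (cases "i < n") auto
qed

lemma empirical_cong: "(\<And>k. k < n \<Longrightarrow> x k = y k) \<Longrightarrow> empirical n x = empirical n y"
  unfolding empirical_def by (metis (mono_tags) atLeastLessThan_iff map_eq_conv set_upt)

lemma main_lemma:
  fixes M :: "'a measure" and \<nu>0 :: "real measure" and X :: "nat \<Rightarrow> 'a \<Rightarrow> real"
    and n :: nat and \<epsilon> :: real
  assumes PM: "prob_space M"
    and PV: "prob_space \<nu>0" and sv: "sets \<nu>0 = sets borel" and m01: "measure \<nu>0 {0..1} = 1"
    and mu_def: "\<mu> = (\<integral>x. x \<partial>\<nu>0)" and mu: "\<mu> \<in> {0<..<1}"
    and n: "n \<ge> 1"
    and ind: "prob_space.indep_vars M (\<lambda>_. borel) X {..<n}"
    and dist: "\<And>i. i < n \<Longrightarrow> distr M borel (X i) = \<nu>0"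
    and eps: "\<epsilon> > 0"
  shows "{\<omega> \<in> space M. Ucb (empirical n (\<lambda>k. X k \<omega>)) \<epsilon> \<le> \<mu>} \<in> sets M
       \<and> {\<omega> \<in> space M. Kinf (empirical n (\<lambda>k. X k \<omega>)) \<mu> \<ge> ereal \<epsilon>} \<in> sets M
       \<and> measure M {\<omega> \<in> space M. Ucb (empirical n (\<lambda>k. X k \<omega>)) \<epsilon> \<le> \<mu>}
         \<le> measure M {\<omega> \<in> space M. Kinf (empirical n (\<lambda>k. X k \<omega>)) \<mu> \<ge> ereal \<epsilon>}
       \<and> measure M {\<omega> \<in> space M. Kinf (empirical n (\<lambda>k. X k \<omega>)) \<mu> \<ge> ereal \<epsilon>}
         \<le> exp 1 * (real n + 2) * exp (- real n * \<epsilon>)"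
proof -
  interpret P: prob_space M by (rule PM)
  have mu1: "0 < \<mu>" "\<mu> < 1" using mu by auto
  note PP = prob_part[OF PM PV sv m01 mu_def ind dist]
  have meas: "X k \<in> borel_measurable M" if "k < n" for k using PP(1) that by blast
  define xv where "xv \<omega> = (\<lambda>k::nat. if k < n then X k \<omega> else (0::real))" for \<omega>
  have xvm: "xv \<in> borel_measurable M" unfolding xv_def[abs_def] by (rule xv_meas) (use meas in auto)
  have emp: "empirical n (\<lambda>k. X k \<omega>) = empirical n (xv \<omega>)" for \<omega>
    by (rule empirical_cong) (simp add: xv_def)
  define SU where "SU = {x::nat\<Rightarrow>real. \<forall>q q0. goodq n q q0 \<and> cq n q \<le> \<epsilon> \<longrightarrow> Lq n q q0 x \<le> \<mu>}"
  define SC where "SC = {x::nat\<Rightarrow>real. \<not> (\<forall>k<n. x k \<in> {0..1})}"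
  define SK' where "SK' = {x::nat\<Rightarrow>real. \<forall>q q0. goodq n q q0 \<and> cq n q < \<epsilon> \<longrightarrow> Lq n q q0 x \<le> \<mu>}"
  have SUb: "SU \<in> sets borel" unfolding SU_def by (rule borel_closed[OF closed_SU])
  have SKb: "SC \<union> SK' \<in> sets borel"
    unfolding SC_def SK'_def
    by (intro sets.Un borel_closed[OF closed_SK] borel_open[OF open_Collect_neg[OF closed_cube]])
  have EU: "{\<omega> \<in> space M. Ucb (empirical n (\<lambda>k. X k \<omega>)) \<epsilon> \<le> \<mu>} = xv -` SU \<inter> space M"
    using Ucb_char[OF n, of \<epsilon>] eps unfolding SU_def emp by auto
  have EK: "{\<omega> \<in> space M. Kinf (empirical n (\<lambda>k. X k \<omega>)) \<mu> \<ge> ereal \<epsilon>} = xv -` (SC \<union> SK') \<inter> space M"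
    using Kinf_char[OF n] unfolding SC_def SK'_def emp by auto
  have EUs: "xv -` SU \<inter> space M \<in> sets M" by (rule measurable_sets[OF xvm SUb])
  have EKs: "xv -` (SC \<union> SK') \<inter> space M \<in> sets M" by (rule measurable_sets[OF xvm SKb])
  have sub: "SU \<subseteq> SC \<union> SK'" unfolding SU_def SC_def SK'_def by force
  have ineq1: "measure M (xv -` SU \<inter> space M) \<le> measure M (xv -` (SC \<union> SK') \<inter> space M)"
    by (rule P.finite_measure_mono[OF _ EKs]) (use sub in auto)
  define c where "c = exp (real n * \<epsilon>) * exp (-1)"
  have cpos: "c > 0" unfolding c_def by simp
  define A where "A j = {\<omega>\<in>space M. c \<le> (\<Prod>k<n. hh \<mu> (real j / (real n + 1)) (X k \<omega>))}" for j :: nat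
  have Am: "A j \<in> sets M" for j
  proof -
    have hhm: "hh \<mu> (real j / (real n + 1)) \<in> borel_measurable borel" unfolding hh_def[abs_def] by measurable
    have um: "(\<lambda>\<omega>. \<Prod>k<n. hh \<mu> (real j / (real n + 1)) (X k \<omega>)) \<in> borel_measurable M"
      by (rule borel_measurable_prod) (use measurable_compose[OF meas hhm] in auto)
    show ?thesis unfolding A_def using um by measurable
  qed
  have Ab: "measure M (A j) \<le> 1 / c" if "j \<le> n + 1" for j
  proof -
    have l0: "0 \<le> real j / (real n + 1)" by simp
    have l1: "real j / (real n + 1) \<le> 1" using that by (simp add: divide_le_eq)
    show ?thesis unfolding A_def using PP(3)[OF _ mu1 l0 l1 cpos] by simp
  qed
  have AEM: "AE \<omega> in M. \<forall>k\<in>{..<n}. X k \<omega> \<in> {0..1}" using PP(2) by simp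
  have AE: "AE \<omega> in M. \<omega> \<in> xv -` (SC \<union> SK') \<inter> space M \<longrightarrow> \<omega> \<in> (\<Union>j\<in>{..n+1}. A j)"
    using AEM
  proof (rule AE_mp, intro AE_I2 impI)
    fix \<omega> assume sp: "\<omega> \<in> space M" and cube: "\<forall>k\<in>{..<n}. X k \<omega> \<in> {0..1}"
      and inK: "\<omega> \<in> xv -` (SC \<union> SK') \<inter> space M"
    have cube': "\<forall>k<n. xv \<omega> k \<in> {0..1}" using cube by (simp add: xv_def)
    then have "xv \<omega> \<in> SK'" using inK unfolding SC_def by auto
    then have H: "\<forall>q q0. goodq n q q0 \<and> cq n q < \<epsilon> \<longrightarrow> Lq n q q0 (xv \<omega>) \<le> \<mu>" by (simp add: SK'_def)
    obtain l where l: "0 \<le> l" "l \<le> 1" "exp (real n * \<epsilon>) \<le> (\<Prod>k<n. hh \<mu> l (xv \<omega> k))"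
      using key_lambda[OF n mu1 eps cube' H] by blast
    obtain j where j: "j \<le> n + 1" "exp (real n * \<epsilon>) * exp (-1) \<le> (\<Prod>k<n. hh \<mu> (real j / (real n + 1)) (xv \<omega> k))"
      using grid_prod[OF n mu1 l(1,2) cube' l(3)] by auto
    have "(\<Prod>k<n. hh \<mu> (real j / (real n + 1)) (xv \<omega> k)) = (\<Prod>k<n. hh \<mu> (real j / (real n + 1)) (X k \<omega>))"
      by (rule prod.cong) (auto simp: xv_def)
    then have "\<omega> \<in> A j" unfolding A_def c_def using sp j(2) by simp
    then show "\<omega> \<in> (\<Union>j\<in>{..n+1}. A j)" using j(1) by auto
  qed
  have Us: "(\<Union>j\<in>{..n+1}. A j) \<in> sets M" using Am by auto
  have "measure M (xv -` (SC \<union> SK') \<inter> space M) \<le> measure M (\<Union>j\<in>{..n+1}. A j)"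
    by (rule P.finite_measure_mono_AE[OF AE Us])
  also have "\<dots> \<le> (\<Sum>j\<in>{..n+1}. measure M (A j))"
    by (rule P.finite_measure_subadditive_finite) (use Am in auto)
  also have "\<dots> \<le> (\<Sum>j\<in>{..n+1}. 1 / c)" by (rule sum_mono) (use Ab in auto)
  also have "\<dots> = (real n + 2) / c" by simp
  also have "\<dots> = exp 1 * (real n + 2) * exp (- real n * \<epsilon>)"
  proof -
    have e1: "exp (-1) = inverse (exp (1::real))" by (rule exp_minus)
    have e2: "exp (- real n * \<epsilon>) = inverse (exp (real n * \<epsilon>))" by (simp add: exp_minus[symmetric])
    show ?thesis unfolding c_def e1 e2 by (simp add: field_simps)
  qed
  finally have ineq2: "measure M (xv -` (SC \<union> SK') \<inter> space M) \<le> exp 1 * (real n + 2) * exp (- real n * \<epsilon>)" .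
  show ?thesis unfolding EU EK using EUs EKs ineq1 ineq2 by simp
qed

theorem proposition1:
  fixes M :: "'a measure" and \<nu>0 :: "real measure" and X :: "nat \<Rightarrow> 'a \<Rightarrow> real"
    and n :: nat and \<epsilon> :: real
  assumes "prob_space M"
    and "prob_space \<nu>0" and "sets \<nu>0 = sets borel" and "measure \<nu>0 {0..1} = 1"
    and "(\<integral>x. x \<partial>\<nu>0) \<in> {0<..<1}"
    and "n \<ge> 1"
    and "prob_space.indep_vars M (\<lambda>_. borel) X {..<n}"
    and "\<And>i. i < n \<Longrightarrow> distr M borel (X i) = \<nu>0"
    and "\<epsilon> > 0"
  shows "{\<omega> \<in> space M. Ucb (empirical n (\<lambda>k. X k \<omega>)) \<epsilon> \<le> (\<integral>x. x \<partial>\<nu>0)} \<in> sets M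
       \<and> {\<omega> \<in> space M. Kinf (empirical n (\<lambda>k. X k \<omega>)) (\<integral>x. x \<partial>\<nu>0) \<ge> ereal \<epsilon>} \<in> sets M
       \<and> measure M {\<omega> \<in> space M. Ucb (empirical n (\<lambda>k. X k \<omega>)) \<epsilon> \<le> (\<integral>x. x \<partial>\<nu>0)}
         \<le> measure M {\<omega> \<in> space M. Kinf (empirical n (\<lambda>k. X k \<omega>)) (\<integral>x. x \<partial>\<nu>0) \<ge> ereal \<epsilon>}
       \<and> measure M {\<omega> \<in> space M. Kinf (empirical n (\<lambda>k. X k \<omega>)) (\<integral>x. x \<partial>\<nu>0) \<ge> ereal \<epsilon>}
         \<le> exp 1 * (real n + 2) * exp (- real n * \<epsilon>)"
  by (rule main_lemma[OF assms(1-4) refl assms(5-9)])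

end
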